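(* Let $L\ge 1$ and consider the following Markov process on $\{0,1\}^L$, with coordinates indexed by $\{0,1,\dots,L-1\}$ and started from an arbitrary state $\Gamma^0$. Given the state $\Gamma^i$, the state $\Gamma^{i+1}$ is obtained by choosing a permutation $\sigma$ of $\{0,\dots,L-1\}$ uniformly at random (independently of the past), setting $\Delta_0=\Gamma^i$, and for $1\le j\le L$ letting $\Delta_j$ be obtained from $\Delta_{j-1}$ by setting $\Delta_j(\sigma(j-1))=\Delta_{j-1}((\sigma(j-1)+1)\bmod L)$ and $\Delta_j(t)=\Delta_{j-1}(t)$ for all $t\ne\sigma(j-1)$; finally $\Gamma^{i+1}=\Delta_L$. Let $T$ be the first time at which the process is in the all-$0$ or the all-$1$ state. Then for every integer $a\ge1$, $\Pr[T\ge 4aL^2]\le L\,2^{-a}$. *)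

theory Defs
  imports "HOL-Probability.Probability" "HOL-Combinatorics.Permutations"
begin

text \<open>States of the process are bool lists of length L (coordinates 0..L-1).\<close>

definition sweep :: "nat \<Rightarrow> (nat \<Rightarrow> nat) \<Rightarrow> bool list \<Rightarrow> bool list" where
  "sweep L \<sigma> \<Gamma> =
     foldl (\<lambda>\<Delta> j. \<Delta>[\<sigma> j := \<Delta> ! ((\<sigma> j + 1) mod L)]) \<Gamma> [0..<L]"

definition step_pmf :: "nat \<Rightarrow> bool list \<Rightarrow> bool list pmf" where
  "step_pmf L \<Gamma> = map_pmf (\<lambda>\<sigma>. sweep L \<sigma> \<Gamma>) (pmf_of_set {\<sigma>. \<sigma> permutes {0..<L}})"

text \<open>Distribution of the trajectory [Gamma^0, ..., Gamma^n] started from Gamma^0.\<close>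
fun traj :: "nat \<Rightarrow> nat \<Rightarrow> bool list \<Rightarrow> bool list list pmf" where
  "traj L 0 \<Gamma> = return_pmf [\<Gamma>]"
| "traj L (Suc n) \<Gamma> = bind_pmf (step_pmf L \<Gamma>) (\<lambda>\<Gamma>'. map_pmf (Cons \<Gamma>) (traj L n \<Gamma>'))"

definition absorbed :: "bool list \<Rightarrow> bool" where
  "absorbed \<Gamma> \<longleftrightarrow> (\<forall>x\<in>set \<Gamma>. \<not> x) \<or> (\<forall>x\<in>set \<Gamma>. x)"

end

theory Submission
  imports Defs
begin


definition stp :: "nat \<Rightarrow> (nat\<Rightarrow>nat) \<Rightarrow> nat \<Rightarrow> nat \<Rightarrow> bool" where
 "stp L \<tau> p k \<longleftrightarrow> 1 \<le> k \<and> \<tau> ((p+k-1) mod L) < \<tau> ((p+k) mod L)"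
definition mm :: "nat \<Rightarrow> (nat\<Rightarrow>nat) \<Rightarrow> nat \<Rightarrow> nat" where
 "mm L \<tau> p = (LEAST k. stp L \<tau> p k)"
definition fm :: "nat \<Rightarrow> (nat\<Rightarrow>nat) \<Rightarrow> nat \<Rightarrow> nat" where
 "fm L \<tau> p = (p + mm L \<tau> p) mod L"
definition app :: "nat \<Rightarrow> (nat\<Rightarrow>nat) \<Rightarrow> bool list \<Rightarrow> bool list" where
 "app L g \<Gamma> = map (\<lambda>t. \<Gamma> ! g t) [0..<L]"

lemma stp_exists:
  assumes perm: "\<tau> permutes {0..<L}" and L: "L \<ge> 2"
  shows "\<exists>k. k \<le> L \<and> stp L \<tau> p k"
proof (rule ccontr)
  assume H: "\<not> ?thesis"
  have inj: "inj \<tau>" using perm permutes_inj by blast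
  have ne: "(p + Suc k) mod L \<noteq> (p + k) mod L" for k
  proof
    assume A: "(p + Suc k) mod L = (p + k) mod L"
    have "((p + k) mod L + 1) mod L = (p + k + 1) mod L" by (rule mod_add_left_eq)
    hence B: "((p + k) mod L + 1) mod L = (p + k) mod L" using A by simp
    have C: "(p + k) mod L < L" using L by simp
    show False
    proof (cases "(p + k) mod L + 1 < L")
      case True then show False using B by simp
    next
      case False
      hence "(p + k) mod L + 1 = L" using C by simp
      then show False using B L by simp
    qed
  qed
  have dec: "\<tau> ((p + Suc k) mod L) < \<tau> ((p + k) mod L)" if "Suc k \<le> L" for k
  proof -
    have "\<not> stp L \<tau> p (Suc k)" using H that by blast
    hence "\<not> \<tau> ((p + k) mod L) < \<tau> ((p + Suc k) mod L)" by (simp add: stp_def)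
    moreover have "\<tau> ((p + Suc k) mod L) \<noteq> \<tau> ((p + k) mod L)"
      using ne[of k] inj by (meson injD)
    ultimately show ?thesis by simp
  qed
  have chain: "1 \<le> k \<Longrightarrow> k \<le> L \<Longrightarrow> \<tau> ((p + k) mod L) < \<tau> ((p + 0) mod L)" for k
  proof (induction k)
    case 0 then show ?case by simp
  next
    case (Suc k)
    show ?case
    proof (cases "k = 0")
      case True then show ?thesis using dec[of 0] Suc by simp
    next
      case False
      then have "\<tau> ((p + k) mod L) < \<tau> ((p + 0) mod L)" using Suc by simp
      moreover have "\<tau> ((p + Suc k) mod L) < \<tau> ((p + k) mod L)" using dec[of k] Suc by simp
      ultimately show ?thesis by linarith
    qed
  qed
  have "\<tau> ((p + L) mod L) < \<tau> ((p + 0) mod L)" using chain[of L] L by simp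
  thus False by simp
qed

lemma stp_mm:
  assumes "\<tau> permutes {0..<L}" "L \<ge> 2"
  shows "stp L \<tau> p (mm L \<tau> p)" "1 \<le> mm L \<tau> p" "mm L \<tau> p \<le> L"
proof -
  obtain k where k: "k \<le> L" "stp L \<tau> p k" using stp_exists[OF assms] by blast
  show "stp L \<tau> p (mm L \<tau> p)" unfolding mm_def by (rule LeastI[where P="stp L \<tau> p", OF k(2)])
  thus "1 \<le> mm L \<tau> p" by (simp add: stp_def)
  have "mm L \<tau> p \<le> k" unfolding mm_def using k by (intro Least_le) 
  thus "mm L \<tau> p \<le> L" using k by simp
qed

definition stpj :: "nat \<Rightarrow> (nat\<Rightarrow>nat) \<Rightarrow> nat \<Rightarrow> nat \<Rightarrow> nat \<Rightarrow> bool" where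
 "stpj L \<tau> j p k \<longleftrightarrow> (k = 0 \<and> j \<le> \<tau> p) \<or> stp L \<tau> p k"

lemma sweep_inv:
  assumes perm: "\<sigma> permutes {0..<L}" and L: "L \<ge> 2" and len: "length \<Gamma> = L"
  shows "j \<le> L \<Longrightarrow> length (foldl (\<lambda>\<Delta> j. \<Delta>[\<sigma> j := \<Delta> ! ((\<sigma> j + 1) mod L)]) \<Gamma> [0..<j]) = L
     \<and> (\<forall>p<L. foldl (\<lambda>\<Delta> j. \<Delta>[\<sigma> j := \<Delta> ! ((\<sigma> j + 1) mod L)]) \<Gamma> [0..<j] ! p
          = \<Gamma> ! ((p + (LEAST k. stpj L (inv \<sigma>) j p k)) mod L))"
proof (induction j)
  case 0
  have "(LEAST k. stpj L (inv \<sigma>) 0 p k) = 0" for p by (rule Least_equality) (auto simp: stpj_def)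
  then show ?case using len by simp
next
  case (Suc j)
  define \<tau> where "\<tau> = inv \<sigma>"
  have tperm: "\<tau> permutes {0..<L}" unfolding \<tau>_def using perm by (rule permutes_inv)
  have inj: "inj \<tau>" using tperm permutes_inj by blast
  define D where "D = foldl (\<lambda>\<Delta> j. \<Delta>[\<sigma> j := \<Delta> ! ((\<sigma> j + 1) mod L)]) \<Gamma> [0..<j]"
  have IH: "length D = L" "\<And>p. p < L \<Longrightarrow> D ! p = \<Gamma> ! ((p + (LEAST k. stpj L \<tau> j p k)) mod L)"
    using Suc unfolding D_def \<tau>_def by auto
  define q where "q = \<sigma> j"
  have qL: "q < L" unfolding q_def using permutes_in_image[OF perm, of j] Suc.prems by simp
  have tq: "\<tau> q = j" unfolding q_def \<tau>_def using permutes_inverses(2)[OF perm] by simp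
  have eq: "foldl (\<lambda>\<Delta> j. \<Delta>[\<sigma> j := \<Delta> ! ((\<sigma> j + 1) mod L)]) \<Gamma> [0..<Suc j] = D[q := D ! ((q+1) mod L)]"
    unfolding D_def q_def by simp
  have ex: "\<exists>k. stpj L \<tau> i p k" for i p
    using stp_exists[OF tperm L, of p] unfolding stpj_def by blast
  have other: "(LEAST k. stpj L \<tau> (Suc j) p k) = (LEAST k. stpj L \<tau> j p k)" if "p \<noteq> q" for p
  proof -
    have "\<tau> p \<noteq> j" using that tq inj by (metis injD)
    hence "stpj L \<tau> (Suc j) p = stpj L \<tau> j p" by (auto simp: stpj_def fun_eq_iff)
    thus ?thesis by simp
  qed
  have q1: "(q + 1) mod L \<noteq> q" using qL L
    by (metis Suc_eq_plus1 less_le_trans mod_less mod_self nat_neq_iff not_less_eq one_less_numeral_iff semiring_norm(76) Suc_leI less_imp_le_nat le_neq_implies_less numeral_2_eq_2)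
  have shift: "stpj L \<tau> (Suc j) q (Suc k) = stpj L \<tau> j ((q+1) mod L) k" for k
  proof (cases k)
    case 0
    have "\<tau> ((q+1) mod L) \<noteq> j" using q1 tq inj by (metis injD)
    then show ?thesis using 0 qL tq by (auto simp: stpj_def stp_def)
  next
    case (Suc k')
    have a: "((q + 1) mod L + Suc k' - 1) mod L = (q + Suc k' + 1 - 1) mod L"
      using mod_add_left_eq[of "q+1" L "k'"] by (simp add: algebra_simps)
    have b: "((q + 1) mod L + Suc k') mod L = (q + Suc k' + 1) mod L"
      using mod_add_left_eq[of "q+1" L "Suc k'"] by (simp add: algebra_simps)
    show ?thesis using Suc a b by (simp add: stpj_def stp_def add.commute add.left_commute)
  qed
  have leastq: "(LEAST k. stpj L \<tau> (Suc j) q k) = Suc (LEAST k. stpj L \<tau> j ((q+1) mod L) k)"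
  proof -
    have "\<not> stpj L \<tau> (Suc j) q 0" using tq by (simp add: stpj_def stp_def)
    hence "(LEAST k. stpj L \<tau> (Suc j) q k) = Suc (LEAST k. stpj L \<tau> (Suc j) q (Suc k))"
      using ex by (metis Least_Suc)
    thus ?thesis using shift by simp
  qed
  show ?case
  proof (intro conjI allI impI)
    show "length (foldl (\<lambda>\<Delta> j. \<Delta>[\<sigma> j := \<Delta> ! ((\<sigma> j + 1) mod L)]) \<Gamma> [0..<Suc j]) = L"
      using eq IH by simp
    fix p assume pL: "p < L"
    show "foldl (\<lambda>\<Delta> j. \<Delta>[\<sigma> j := \<Delta> ! ((\<sigma> j + 1) mod L)]) \<Gamma> [0..<Suc j] ! p =
         \<Gamma> ! ((p + (LEAST k. stpj L (inv \<sigma>) (Suc j) p k)) mod L)"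
    proof (cases "p = q")
      case True
      have "D[q := D ! ((q+1) mod L)] ! p = D ! ((q+1) mod L)" using True IH(1) qL by simp
      also have "\<dots> = \<Gamma> ! (((q+1) mod L + (LEAST k. stpj L \<tau> j ((q+1) mod L) k)) mod L)"
        using IH(2) L by simp
      also have "((q+1) mod L + (LEAST k. stpj L \<tau> j ((q+1) mod L) k)) mod L
           = (p + (LEAST k. stpj L \<tau> (Suc j) p k)) mod L"
        using True leastq by (simp add: mod_add_left_eq)
      finally show ?thesis using eq \<tau>_def by simp
    next
      case False
      then show ?thesis using eq IH other[OF False] \<tau>_def pL by simp
    qed
  qed
qed

lemma sweep_app:
  assumes perm: "\<sigma> permutes {0..<L}" and L: "L \<ge> 2" and len: "length \<Gamma> = L"
  shows "sweep L \<sigma> \<Gamma> = app L (fm L (inv \<sigma>)) \<Gamma>"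
proof -
  have tperm: "inv \<sigma> permutes {0..<L}" using perm by (rule permutes_inv)
  have S: "stpj L (inv \<sigma>) L p = stp L (inv \<sigma>) p" if "p < L" for p
    using permutes_in_image[OF tperm, of p] that by (auto simp: stpj_def fun_eq_iff stp_def)
  have I: "length (sweep L \<sigma> \<Gamma>) = L"
    "\<And>p. p < L \<Longrightarrow> sweep L \<sigma> \<Gamma> ! p = \<Gamma> ! ((p + (LEAST k. stpj L (inv \<sigma>) L p k)) mod L)"
    using sweep_inv[OF perm L len, of L] unfolding sweep_def by auto
  show ?thesis
    by (rule nth_equalityI) (auto simp: I app_def S fm_def mm_def)
qed



definition PS :: "nat \<Rightarrow> (nat \<Rightarrow> nat) set" where "PS L = {\<tau>. \<tau> permutes {0..<L}}"
definition U :: "nat \<Rightarrow> (nat \<Rightarrow> nat) pmf" where "U L = pmf_of_set (PS L)"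
definition pf :: "nat \<Rightarrow> (nat \<Rightarrow> nat) pmf" where "pf L = map_pmf (fm L) (U L)"

primrec M :: "nat \<Rightarrow> nat \<Rightarrow> (nat \<Rightarrow> nat) pmf" where
  "M L 0 = return_pmf id"
| "M L (Suc n) = bind_pmf (pf L) (\<lambda>f. map_pmf (\<lambda>g. g \<circ> f) (M L n))"

lemma PS_fin: "finite (PS L)" unfolding PS_def by (rule finite_permutations) simp
lemma PS_ne: "PS L \<noteq> {}" unfolding PS_def using permutes_id by blast
lemma set_U: "set_pmf (U L) = PS L" unfolding U_def using PS_fin PS_ne by simp
lemma set_pf: "set_pmf (pf L) = fm L ` PS L" unfolding pf_def by (simp add: set_U)
lemma fin_pf: "finite (set_pmf (pf L))" using set_pf PS_fin by simp

lemma fm_lt: "L \<ge> 1 \<Longrightarrow> fm L \<tau> p < L" unfolding fm_def by simp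

lemma M_fin: "finite (set_pmf (M L n))"
  by (induction n) (auto simp: fin_pf)

lemma M_range: "L \<ge> 1 \<Longrightarrow> g \<in> set_pmf (M L n) \<Longrightarrow> x < L \<Longrightarrow> g x < L"
proof (induction n arbitrary: g x)
  case 0 then show ?case by simp
next
  case (Suc n)
  then obtain f h where "f \<in> set_pmf (pf L)" "h \<in> set_pmf (M L n)" "g = h \<circ> f" by auto
  moreover then have "f x < L" using set_pf fm_lt Suc.prems by auto
  ultimately show ?case using Suc.IH Suc.prems by auto
qed

lemma M_add: "M L (m + n) = bind_pmf (M L m) (\<lambda>g. map_pmf (\<lambda>h. h \<circ> g) (M L n))"
proof (induction m)
  case 0 then show ?case by (simp add: bind_return_pmf)
next
  case (Suc m)
  have "M L (Suc m + n) = bind_pmf (pf L) (\<lambda>f. map_pmf (\<lambda>g. g \<circ> f) (M L (m + n)))" by simp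
  also have "\<dots> = bind_pmf (pf L) (\<lambda>f. bind_pmf (M L m) (\<lambda>g. map_pmf (\<lambda>h. h \<circ> (g \<circ> f)) (M L n)))"
    by (simp add: Suc map_bind_pmf map_pmf_comp comp_def)
  also have "\<dots> = bind_pmf (M L (Suc m)) (\<lambda>g. map_pmf (\<lambda>h. h \<circ> g) (M L n))"
    by (simp add: bind_assoc_pmf bind_map_pmf)
  finally show ?case .
qed

lemma M_Suc': "M L (Suc n) = bind_pmf (pf L) (\<lambda>f. map_pmf (\<lambda>g. f \<circ> g) (M L n))"
proof -
  have "M L (n + 1) = bind_pmf (M L n) (\<lambda>g. map_pmf (\<lambda>h. h \<circ> g) (M L 1))" by (rule M_add)
  also have "M L 1 = pf L" by (simp add: bind_return_pmf' map_pmf_def[symmetric] pmf.map_id0[unfolded id_def])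
  also have "bind_pmf (M L n) (\<lambda>g. map_pmf (\<lambda>h. h \<circ> g) (pf L))
      = bind_pmf (M L n) (\<lambda>g. bind_pmf (pf L) (\<lambda>h. return_pmf (h \<circ> g)))"
    by (simp add: map_pmf_def)
  also have "\<dots> = bind_pmf (pf L) (\<lambda>h. bind_pmf (M L n) (\<lambda>g. return_pmf (h \<circ> g)))"
    by (rule bind_commute_pmf)
  also have "\<dots> = bind_pmf (pf L) (\<lambda>f. map_pmf (\<lambda>g. f \<circ> g) (M L n))"
    by (simp add: map_pmf_def)
  finally show ?thesis by simp
qed

lemma step_pmf_eq:
  assumes L: "L \<ge> 2" and len: "length \<Gamma> = L"
  shows "step_pmf L \<Gamma> = map_pmf (\<lambda>f. app L f \<Gamma>) (pf L)"
proof -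
  have "step_pmf L \<Gamma> = map_pmf (\<lambda>\<sigma>. app L (fm L (inv \<sigma>)) \<Gamma>) (U L)"
    unfolding step_pmf_def U_def PS_def[symmetric]
    using set_U[of L] by (intro map_pmf_cong refl) (auto simp: U_def PS_def sweep_app[OF _ L len])
  also have "\<dots> = map_pmf (\<lambda>\<tau>. app L (fm L \<tau>) \<Gamma>) (map_pmf inv (U L))"
    by (simp add: map_pmf_comp)
  also have "map_pmf inv (U L) = U L"
  proof -
    have inj: "inj_on inv (PS L)" unfolding PS_def
      by (metis (mono_tags, lifting) inj_onI mem_Collect_eq permutes_inv_inv)
    have img: "inv ` PS L = PS L" unfolding PS_def
      by (auto simp: permutes_inv image_iff) (metis permutes_inv permutes_inv_inv)
    show ?thesis unfolding U_def using map_pmf_of_set_inj[OF inj PS_ne PS_fin] img by simp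
  qed
  finally show ?thesis by (simp add: pf_def map_pmf_comp)
qed

lemma app_id: assumes "length \<Gamma> = L" shows "app L id \<Gamma> = \<Gamma>"
  unfolding app_def using map_nth[of \<Gamma>] assms by simp

lemma app_comp: "L \<ge> 1 \<Longrightarrow> (\<And>x. x < L \<Longrightarrow> g x < L) \<Longrightarrow> length \<Gamma> = L \<Longrightarrow>
   app L g (app L f \<Gamma>) = app L (f \<circ> g) \<Gamma>"
  unfolding app_def by (auto intro!: nth_equalityI)

lemma length_app: "length (app L g \<Gamma>) = L" by (simp add: app_def)

lemma traj_nth:
  assumes L: "L \<ge> 2"
  shows "k \<le> n \<Longrightarrow> length \<Gamma> = L \<Longrightarrow>
    map_pmf (\<lambda>xs. xs ! k) (traj L n \<Gamma>) = map_pmf (\<lambda>g. app L g \<Gamma>) (M L k)"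
proof (induction n arbitrary: k \<Gamma>)
  case 0 then show ?case by (simp add: app_id)
next
  case (Suc n)
  show ?case
  proof (cases k)
    case 0
    have "map_pmf (\<lambda>xs. xs ! k) (traj L (Suc n) \<Gamma>) = bind_pmf (step_pmf L \<Gamma>) (\<lambda>_. return_pmf \<Gamma>)"
      using 0 by (simp add: map_bind_pmf map_pmf_comp map_pmf_const)
    also have "\<dots> = return_pmf \<Gamma>" by (simp add: bind_pmf_const)
    finally show ?thesis using 0 Suc.prems by (simp add: app_id)
  next
    case (Suc k')
    have "map_pmf (\<lambda>xs. xs ! k) (traj L (Suc n) \<Gamma>)
       = bind_pmf (step_pmf L \<Gamma>) (\<lambda>\<Gamma>'. map_pmf (\<lambda>xs. xs ! k') (traj L n \<Gamma>'))"
      using Suc by (simp add: map_bind_pmf map_pmf_comp)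
    also have "\<dots> = bind_pmf (map_pmf (\<lambda>f. app L f \<Gamma>) (pf L)) (\<lambda>\<Gamma>'. map_pmf (\<lambda>g. app L g \<Gamma>') (M L k'))"
      using Suc.prems Suc.IH Suc step_pmf_eq[OF L Suc.prems(2)]
      by (intro bind_pmf_cong refl) (auto simp: length_app)
    also have "\<dots> = bind_pmf (pf L) (\<lambda>f. map_pmf (\<lambda>g. app L (f \<circ> g) \<Gamma>) (M L k'))"
      unfolding bind_map_pmf using L Suc.prems
      by (intro bind_pmf_cong refl map_pmf_cong) (auto simp: app_comp M_range)
    also have "\<dots> = map_pmf (\<lambda>g. app L g \<Gamma>) (M L k)"
      unfolding Suc M_Suc'[of L k'] by (simp add: map_bind_pmf map_pmf_comp comp_def del: M.simps)
    finally show ?thesis .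
  qed
qed



lemma halving:
  assumes L: "a < L" "b < L" "a \<noteq> b"
    and C: "\<And>\<tau>. C (\<tau> \<circ> Transposition.transpose a b) = C \<tau>"
  shows "2 * card {\<tau>\<in>PS L. \<tau> a < \<tau> b \<and> C \<tau>} = card {\<tau>\<in>PS L. C \<tau>}"
proof -
  define t where "t = Transposition.transpose a b"
  define A1 where "A1 = {\<tau>\<in>PS L. \<tau> a < \<tau> b \<and> C \<tau>}"
  define A2 where "A2 = {\<tau>\<in>PS L. \<tau> b < \<tau> a \<and> C \<tau>}"
  have tp: "t permutes {0..<L}" unfolding t_def using L by (intro permutes_swap_id) auto
  have tt: "\<tau> \<circ> t \<circ> t = \<tau>" for \<tau> :: "nat \<Rightarrow> nat" unfolding t_def by (simp add: fun_eq_iff)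
  have bij: "bij_betw (\<lambda>\<tau>. \<tau> \<circ> t) A1 A2"
  proof (rule bij_betw_byWitness[where f'="\<lambda>\<tau>. \<tau> \<circ> t"])
    show "\<forall>a\<in>A1. a \<circ> t \<circ> t = a" using tt by simp
    show "\<forall>a\<in>A2. a \<circ> t \<circ> t = a" using tt by simp
    have mem: "\<tau> \<circ> t \<in> PS L" if "\<tau> \<in> PS L" for \<tau>
      using that tp unfolding PS_def by (auto intro: permutes_compose)
    have ta: "t a = b" "t b = a"
      unfolding t_def by simp_all
    have Ct: "C (\<tau> \<circ> t) = C \<tau>" for \<tau> unfolding t_def by (rule C)
    show "(\<lambda>\<tau>. \<tau> \<circ> t) ` A1 \<subseteq> A2" unfolding A1_def A2_def
      using mem ta Ct by auto
    show "(\<lambda>\<tau>. \<tau> \<circ> t) ` A2 \<subseteq> A1" unfolding A1_def A2_def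
      using mem ta Ct by auto
  qed
  have c: "card A1 = card A2" using bij by (rule bij_betw_same_card)
  have U: "{\<tau>\<in>PS L. C \<tau>} = A1 \<union> A2"
  proof -
    have "\<tau> a \<noteq> \<tau> b" if "\<tau> \<in> PS L" for \<tau>
    proof
      have "inj \<tau>" using that unfolding PS_def by (simp add: permutes_inj)
      moreover assume "\<tau> a = \<tau> b"
      ultimately have "a = b" by (rule injD)
      then show False using L(3) by simp
    qed
    thus ?thesis unfolding A1_def A2_def using linorder_neq_iff by blast
  qed
  have fin: "finite A1" "finite A2" unfolding A1_def A2_def using PS_fin by auto
  have "card {\<tau>\<in>PS L. C \<tau>} = card A1 + card A2"
  proof -
    have "A1 \<inter> A2 = {}" unfolding A1_def A2_def by auto
    then show ?thesis unfolding U using fin by (rule card_Un_disjoint[rotated 2])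
  qed
  thus ?thesis using c A1_def by simp
qed

lemma succ_mod: fixes x L :: nat assumes "x < L" shows "(x + 1) mod L = (if x + 1 < L then x + 1 else 0)"
proof (cases "x + 1 < L")
  case True then show ?thesis using mod_less[OF True] by simp
next
  case False then have "x + 1 = L" using assms by simp
  then show ?thesis by simp
qed

lemma mm_shift:
  assumes tp: "\<tau> \<in> PS L" and L: "L \<ge> 2" and w: "w < L" and z: "z = (w + 1) mod L"
    and lt: "\<tau> z < \<tau> w"
  shows "mm L \<tau> w = Suc (mm L \<tau> z)"
proof -
  have perm: "\<tau> permutes {0..<L}" using tp PS_def by simp
  have n0: "\<not> stp L \<tau> w 0" by (simp add: stp_def)
  have sh: "stp L \<tau> w (Suc k) = stp L \<tau> z k" for k
  proof (cases k)
    case 0 then show ?thesis using lt z w by (simp add: stp_def)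
  next
    case (Suc k')
    have a: "(z + k - 1) mod L = (w + Suc k - 1) mod L"
      using mod_add_left_eq[of "w+1" L "k'"] Suc z by (simp add: algebra_simps)
    have b: "(z + k) mod L = (w + Suc k) mod L"
      using mod_add_left_eq[of "w+1" L "k"] Suc z by (simp add: algebra_simps)
    show ?thesis using a b Suc by (simp add: stp_def)
  qed
  obtain k where "stp L \<tau> w k" using stp_exists[OF perm L] by blast
  then have "mm L \<tau> w = Suc (LEAST k. stp L \<tau> w (Suc k))"
    unfolding mm_def using n0 by (rule Least_Suc)
  thus ?thesis using sh by (simp add: mm_def)
qed

lemma card_diff:
  assumes L: "L \<ge> 2" and xy: "x < L" "y < L" "x \<noteq> y"
  shows "real (card (PS L)) \<le> 4 * real (card {\<tau>\<in>PS L. mm L \<tau> x \<noteq> mm L \<tau> y})"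
proof -
  define d where "d = (y + L - x) mod L"
  have fin: "finite {\<tau>\<in>PS L. mm L \<tau> x \<noteq> mm L \<tau> y}" using PS_fin by auto
  have half0: "2 * card {\<tau>\<in>PS L. \<tau> a < \<tau> b} = card (PS L)" if "a < L" "b < L" "a \<noteq> b" for a b
    using halving[of a L b "\<lambda>_. True"] that by simp
  consider (one) "y = (x + 1) mod L" | (two) "x = (y + 1) mod L"
    | (gen) "y \<noteq> (x + 1) mod L" "x \<noteq> (y + 1) mod L" by blast
  then show ?thesis
  proof cases
    case one
    have "{\<tau>\<in>PS L. \<tau> y < \<tau> x} \<subseteq> {\<tau>\<in>PS L. mm L \<tau> x \<noteq> mm L \<tau> y}"
    proof safe
      fix \<tau> assume "\<tau> \<in> PS L" "\<tau> y < \<tau> x" "mm L \<tau> x = mm L \<tau> y"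
      then show False using mm_shift[OF _ L xy(1) one, of \<tau>] by simp
    qed
    hence "card {\<tau>\<in>PS L. \<tau> y < \<tau> x} \<le> card {\<tau>\<in>PS L. mm L \<tau> x \<noteq> mm L \<tau> y}"
      using fin by (rule card_mono[rotated])
    then have "card (PS L) \<le> 2 * card {\<tau>\<in>PS L. mm L \<tau> x \<noteq> mm L \<tau> y}" using half0[of y x] xy by linarith
    then have "real (card (PS L)) \<le> real (2 * card {\<tau>\<in>PS L. mm L \<tau> x \<noteq> mm L \<tau> y})" by (rule of_nat_mono)
    then show ?thesis by simp
  next
    case two
    have "{\<tau>\<in>PS L. \<tau> x < \<tau> y} \<subseteq> {\<tau>\<in>PS L. mm L \<tau> x \<noteq> mm L \<tau> y}"
    proof safe
      fix \<tau> assume "\<tau> \<in> PS L" "\<tau> x < \<tau> y" "mm L \<tau> x = mm L \<tau> y"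
      then show False using mm_shift[OF _ L xy(2) two, of \<tau>] by simp
    qed
    hence "card {\<tau>\<in>PS L. \<tau> x < \<tau> y} \<le> card {\<tau>\<in>PS L. mm L \<tau> x \<noteq> mm L \<tau> y}"
      using fin by (rule card_mono[rotated])
    then have "card (PS L) \<le> 2 * card {\<tau>\<in>PS L. mm L \<tau> x \<noteq> mm L \<tau> y}" using half0[of x y] xy by linarith
    then have "real (card (PS L)) \<le> real (2 * card {\<tau>\<in>PS L. mm L \<tau> x \<noteq> mm L \<tau> y})" by (rule of_nat_mono)
    then show ?thesis by simp
  next
    case gen
    define x1 where "x1 = (x + 1) mod L"
    define y1 where "y1 = (y + 1) mod L"
    have x1L: "x1 < L" "y1 < L" unfolding x1_def y1_def using L by auto
    have ex1: "x1 = (if x + 1 < L then x + 1 else 0)" unfolding x1_def by (rule succ_mod[OF xy(1)])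
    have ey1: "y1 = (if y + 1 < L then y + 1 else 0)" unfolding y1_def by (rule succ_mod[OF xy(2)])
    have g2: "y \<noteq> x1" "x \<noteq> y1" using gen unfolding x1_def y1_def by auto
    have dist: "x \<noteq> x1" "y \<noteq> y1" "x1 \<noteq> y1" "x \<noteq> y1" "y \<noteq> x1"
      using g2 xy L unfolding ex1 ey1 by (auto split: if_splits)
    have sub: "{\<tau>\<in>PS L. \<tau> x < \<tau> x1 \<and> \<tau> y1 < \<tau> y} \<subseteq> {\<tau>\<in>PS L. mm L \<tau> x \<noteq> mm L \<tau> y}"
    proof safe
      fix \<tau> assume tp: "\<tau> \<in> PS L" and a: "\<tau> x < \<tau> x1" and b: "\<tau> y1 < \<tau> y"
        and eq: "mm L \<tau> x = mm L \<tau> y"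
      have perm: "\<tau> permutes {0..<L}" using tp PS_def by simp
      have "stp L \<tau> x 1" using a xy unfolding stp_def x1_def by simp
      hence "mm L \<tau> x \<le> 1" unfolding mm_def by (rule Least_le)
      hence "mm L \<tau> y = 1" using stp_mm(2)[OF perm L, of x] eq by simp
      hence "stp L \<tau> y 1" using stp_mm(1)[OF perm L, of y] by simp
      thus False using b xy unfolding stp_def y1_def by simp
    qed
    have c1: "2 * card {\<tau>\<in>PS L. \<tau> x < \<tau> x1 \<and> \<tau> y1 < \<tau> y} = card {\<tau>\<in>PS L. \<tau> y1 < \<tau> y}"
      using dist x1L xy by (intro halving) (auto simp: transpose_apply_other)
    have c2: "2 * card {\<tau>\<in>PS L. \<tau> y1 < \<tau> y} = card (PS L)"
      using half0[of y1 y] dist x1L xy by simp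
    have "card {\<tau>\<in>PS L. \<tau> x < \<tau> x1 \<and> \<tau> y1 < \<tau> y} \<le> card {\<tau>\<in>PS L. mm L \<tau> x \<noteq> mm L \<tau> y}"
      using fin sub by (rule card_mono)
    then have "card (PS L) \<le> 4 * card {\<tau>\<in>PS L. mm L \<tau> x \<noteq> mm L \<tau> y}" using c1 c2 by linarith
    then have "real (card (PS L)) \<le> real (4 * card {\<tau>\<in>PS L. mm L \<tau> x \<noteq> mm L \<tau> y})" by (rule of_nat_mono)
    then show ?thesis by simp
  qed
qed



lemma dist_eq: fixes x y L :: nat
  shows "x < L \<Longrightarrow> y < L \<Longrightarrow> (y + L - x) mod L = (if x \<le> y then y - x else y + L - x)"
proof -
  assume a: "x < L" "y < L"
  show ?thesis
  proof (cases "x \<le> y")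
    case True
    then have "y + L - x = (y - x) + L" by simp
    then have "(y + L - x) mod L = ((y - x) + L) mod L" by (simp only:)
    also have "\<dots> = y - x" using a by simp
    finally show ?thesis using True by simp
  next
    case False
    then show ?thesis using a by simp
  qed
qed

lemma shift_mod: fixes x y L s j :: nat assumes "(x + s) mod L = y"
  shows "((x + j) mod L + s) mod L = (y + j) mod L"
proof -
  have e: "x + j + s = (x + s) + j" by simp
  have "((x + j) mod L + s) mod L = (x + j + s) mod L" by (rule mod_add_left_eq)
  also have "\<dots> = ((x + s) + j) mod L" by (simp only: e)
  also have "\<dots> = ((x + s) mod L + j) mod L" by (simp add: mod_add_left_eq)
  finally show ?thesis using assms by simp
qed

lemma rot_sum:
  assumes L: "L \<ge> 2" and xy: "x < L" "y < L"
  shows "(\<Sum>\<tau>\<in>PS L. real (mm L \<tau> y)) = (\<Sum>\<tau>\<in>PS L. real (mm L \<tau> x))"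
proof -
  define s where "s = (y + L - x) mod L"
  have sL: "s < L" unfolding s_def using L by simp
  have xs: "(x + s) mod L = y"
    using xy unfolding s_def by (auto simp: dist_eq)
  define \<rho> where "\<rho> = (\<lambda>p. if p < L then (p + s) mod L else p)"
  define \<rho>' where "\<rho>' = (\<lambda>p. if p < L then (p + (L - s)) mod L else p)"
  have r1: "\<rho>' (\<rho> p) = p" for p
  proof (cases "p < L")
    case True
    have "((p + s) mod L + (L - s)) mod L = (p + s + (L - s)) mod L" by (simp add: mod_add_left_eq)
    also have "p + s + (L - s) = p + L" using sL by simp
    finally show ?thesis using True L unfolding \<rho>_def \<rho>'_def by simp
  qed (simp add: \<rho>_def \<rho>'_def)
  have r2: "\<rho> (\<rho>' p) = p" for p
  proof (cases "p < L")
    case True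
    have "((p + (L - s)) mod L + s) mod L = (p + (L - s) + s) mod L" by (simp add: mod_add_left_eq)
    also have "p + (L - s) + s = p + L" using sL by simp
    finally show ?thesis using True L unfolding \<rho>_def \<rho>'_def by simp
  qed (simp add: \<rho>_def \<rho>'_def)
  have rl: "\<rho> p < L" "\<rho>' p < L" if "p < L" for p
    using that L unfolding \<rho>_def \<rho>'_def by auto
  have rp: "\<rho> permutes {0..<L}"
  proof (rule bij_imp_permutes)
    show "bij_betw \<rho> {0..<L} {0..<L}"
      by (rule bij_betw_byWitness[where f'=\<rho>']) (use r1 r2 rl in auto)
    show "\<And>p. p \<notin> {0..<L} \<Longrightarrow> \<rho> p = p" by (simp add: \<rho>_def)
  qed
  have rp': "\<rho>' permutes {0..<L}"
  proof (rule bij_imp_permutes)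
    show "bij_betw \<rho>' {0..<L} {0..<L}"
      by (rule bij_betw_byWitness[where f'=\<rho>]) (use r1 r2 rl in auto)
    show "\<And>p. p \<notin> {0..<L} \<Longrightarrow> \<rho>' p = p" by (simp add: \<rho>'_def)
  qed
  have bij: "bij_betw (\<lambda>\<tau>. \<tau> \<circ> \<rho>) (PS L) (PS L)"
  proof (rule bij_betw_byWitness[where f'="\<lambda>\<tau>. \<tau> \<circ> \<rho>'"])
    show "\<forall>a\<in>PS L. a \<circ> \<rho> \<circ> \<rho>' = a" using r2 by (simp add: fun_eq_iff)
    show "\<forall>a\<in>PS L. a \<circ> \<rho>' \<circ> \<rho> = a" using r1 by (simp add: fun_eq_iff)
    show "(\<lambda>\<tau>. \<tau> \<circ> \<rho>) ` PS L \<subseteq> PS L" using rp unfolding PS_def by (auto intro: permutes_compose)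
    show "(\<lambda>\<tau>. \<tau> \<circ> \<rho>') ` PS L \<subseteq> PS L" using rp' unfolding PS_def by (auto intro: permutes_compose)
  qed
  have mmrot: "mm L (\<tau> \<circ> \<rho>) x = mm L \<tau> y" for \<tau>
  proof -
    have "stp L (\<tau> \<circ> \<rho>) x k = stp L \<tau> y k" for k
    proof (cases k)
      case 0 then show ?thesis by (simp add: stp_def)
    next
      case (Suc k')
      have a: "\<rho> ((x + k - 1) mod L) = (y + k - 1) mod L"
        using shift_mod[OF xs, of k'] Suc L unfolding \<rho>_def by simp
      have b: "\<rho> ((x + k) mod L) = (y + k) mod L"
        using shift_mod[OF xs, of k] Suc L unfolding \<rho>_def by simp
      show ?thesis using a b by (simp add: stp_def)
    qed
    then have "stp L (\<tau> \<circ> \<rho>) x = stp L \<tau> y" by (simp add: fun_eq_iff)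
    then show ?thesis unfolding mm_def by simp
  qed
  have "(\<Sum>\<tau>\<in>PS L. real (mm L (\<tau> \<circ> \<rho>) x)) = (\<Sum>\<tau>\<in>PS L. real (mm L \<tau> x))"
    using sum.reindex_bij_betw[OF bij, of "\<lambda>\<tau>. real (mm L \<tau> x)"] by simp
  then show ?thesis using mmrot by simp
qed

lemma lift:
  assumes tp: "\<tau> \<in> PS L" and L: "L \<ge> 2" and xy: "x < L" "y < L" "x \<noteq> y"
  defines "d \<equiv> (y + L - x) mod L"
  shows "mm L \<tau> x \<le> d + mm L \<tau> y" "d + mm L \<tau> y \<le> L + mm L \<tau> x"
    "let dd = (fm L \<tau> y + L - fm L \<tau> x) mod L; e = real d + real (mm L \<tau> y) - real (mm L \<tau> x)
     in real dd * (real L - real dd) = e * (real L - e)"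
proof -
  have perm: "\<tau> permutes {0..<L}" using tp PS_def by simp
  define a where "a = mm L \<tau> x"
  define b where "b = mm L \<tau> y"
  have xd: "(x + d) mod L = y" using xy unfolding d_def by (auto simp: dist_eq)
  have yd: "(y + (L - d)) mod L = x" using xy unfolding d_def by (auto simp: dist_eq)
  have dL: "d < L" unfolding d_def using L by simp
  have sb: "stp L \<tau> y b" "1 \<le> b" "b \<le> L" using stp_mm[OF perm L] b_def by auto
  have sa: "stp L \<tau> x a" "1 \<le> a" "a \<le> L" using stp_mm[OF perm L] a_def by auto
  have i: "a \<le> d + b"
  proof -
    have e1: "(x + (d + b) - 1) mod L = (y + b - 1) mod L"
    proof -
      have "x + (d + b) - 1 = (x + d) + (b - 1)" using sb by simp
      then have "(x + (d + b) - 1) mod L = ((x + d) + (b - 1)) mod L" by (simp only:)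
      also have "\<dots> = ((x + d) mod L + (b - 1)) mod L" by (simp add: mod_add_left_eq)
      finally show ?thesis using xd sb by simp
    qed
    have e2: "(x + (d + b)) mod L = (y + b) mod L"
    proof -
      have "(x + (d + b)) mod L = ((x + d) mod L + b) mod L" by (simp add: mod_add_left_eq add.assoc)
      then show ?thesis using xd by simp
    qed
    have "stp L \<tau> x (d + b)" using sb e1 e2 unfolding stp_def by simp
    then show ?thesis unfolding a_def mm_def by (rule Least_le)
  qed
  have ii: "d + b \<le> L + a"
  proof -
    have e1: "(y + (L - d + a) - 1) mod L = (x + a - 1) mod L"
    proof -
      have "y + (L - d + a) - 1 = (y + (L - d)) + (a - 1)" using sa dL by simp
      then have "(y + (L - d + a) - 1) mod L = ((y + (L - d)) + (a - 1)) mod L" by (simp only:)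
      also have "\<dots> = ((y + (L - d)) mod L + (a - 1)) mod L" by (simp add: mod_add_left_eq)
      finally show ?thesis using yd sa by simp
    qed
    have e2: "(y + (L - d + a)) mod L = (x + a) mod L"
    proof -
      have "(y + (L - d + a)) mod L = ((y + (L - d)) mod L + a) mod L" by (simp add: mod_add_left_eq add.assoc)
      then show ?thesis using yd by simp
    qed
    have "stp L \<tau> y (L - d + a)" using sa e1 e2 dL unfolding stp_def by simp
    then have "b \<le> L - d + a" unfolding b_def mm_def by (rule Least_le)
    then show ?thesis using dL by simp
  qed
  show "mm L \<tau> x \<le> d + mm L \<tau> y" using i a_def b_def by simp
  show "d + mm L \<tau> y \<le> L + mm L \<tau> x" using ii a_def b_def by simp
  define dd where "dd = (fm L \<tau> y + L - fm L \<tau> x) mod L"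
  define e where "e = int d + int b - int a"
  have e_rng: "0 \<le> e" "e \<le> int L" using i ii unfolding e_def by linarith+
  have fx: "fm L \<tau> x = (x + a) mod L" "fm L \<tau> y = (y + b) mod L" by (simp_all add: fm_def a_def b_def)
  have dd_int: "int dd = e mod int L"
  proof -
    have lt: "fm L \<tau> x < L" using fm_lt L by simp
    have "int dd = (int (fm L \<tau> y) + int L - int (fm L \<tau> x)) mod int L"
      unfolding dd_def using lt by (simp add: of_nat_mod of_nat_diff)
    also have "\<dots> = (((int y + int b) mod int L) - ((int x + int a) mod int L) + int L) mod int L"
      unfolding fx by (simp add: of_nat_mod algebra_simps)
    also have "\<dots> = ((int y + int b) - (int x + int a)) mod int L"
      by (simp add: mod_diff_eq)
    finally have A: "int dd = ((int y + int b) - (int x + int a)) mod int L" .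
    have "int d = (int y + int L - int x) mod int L"
      unfolding d_def using xy by (simp add: of_nat_mod of_nat_diff)
    then have "e mod int L = ((int y + int L - int x) mod int L + int b - int a) mod int L"
      unfolding e_def by simp
    also have "\<dots> = ((int y + int L - int x) + int b - int a) mod int L"
    proof -
      have "((int y + int L - int x) mod int L + (int b - int a)) mod int L
          = ((int y + int L - int x) + (int b - int a)) mod int L" by (rule mod_add_left_eq)
      then show ?thesis by (simp add: add_diff_eq)
    qed
    also have "\<dots> = ((int y + int b) - (int x + int a)) mod int L"
    proof -
      have "(int y + int L - int x) + int b - int a = ((int y + int b) - (int x + int a)) + int L" by simp
      then have "((int y + int L - int x) + int b - int a) mod int L = (((int y + int b) - (int x + int a)) + int L) mod int L" by (simp only:)
      also have "\<dots> = ((int y + int b) - (int x + int a)) mod int L" by (rule mod_add_self2)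
      finally show ?thesis .
    qed
    finally show ?thesis using A by simp
  qed
  have "real dd * (real L - real dd) = real_of_int e * (real L - real_of_int e)"
  proof (cases "e = int L")
    case True
    then have "dd = 0" using dd_int by simp
    then show ?thesis using True by simp
  next
    case False
    then have "e mod int L = e" using e_rng by simp
    then have "int dd = e" using dd_int by simp
    then have "real dd = real_of_int e" by (metis of_int_of_nat_eq)
    then show ?thesis by simp
  qed
  then show "let dd = (fm L \<tau> y + L - fm L \<tau> x) mod L; e = real d + real (mm L \<tau> y) - real (mm L \<tau> x)
     in real dd * (real L - real dd) = e * (real L - e)"
    unfolding dd_def e_def a_def b_def Let_def by simp
qed



definition dst :: "nat \<Rightarrow> nat \<Rightarrow> nat \<Rightarrow> nat" where "dst L u v = (v + L - u) mod L"
definition phi :: "nat \<Rightarrow> nat \<Rightarrow> real" where "phi L k = real k * (real L - real k)"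

lemma core:
  assumes L: "L \<ge> 2" and xy: "x < L" "y < L" "x \<noteq> y"
  shows "measure_pmf.expectation (pf L) (\<lambda>f. phi L (dst L (f x) (f y))) \<le> phi L (dst L x y) - 1/4"
proof -
  define d where "d = dst L x y"
  define D where "D = (\<lambda>\<tau>. real (mm L \<tau> y) - real (mm L \<tau> x))"
  define c where "c = real (card (PS L))"
  have cpos: "c > 0" unfolding c_def using PS_fin PS_ne by (simp add: card_gt_0_iff)
  have eqn: "phi L (dst L (fm L \<tau> x) (fm L \<tau> y)) = phi L d + D \<tau> * (real L - 2 * real d) - (D \<tau>)^2"
    if "\<tau> \<in> PS L" for \<tau>
  proof -
    have "phi L (dst L (fm L \<tau> x) (fm L \<tau> y)) = (real d + D \<tau>) * (real L - (real d + D \<tau>))"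
      using lift(3)[OF that L xy] unfolding phi_def dst_def d_def D_def Let_def by (simp add: algebra_simps)
    then show ?thesis unfolding phi_def by (simp add: algebra_simps power2_eq_square)
  qed
  have sq: "(D \<tau>)^2 \<ge> (if mm L \<tau> x \<noteq> mm L \<tau> y then 1 else 0)" for \<tau>
  proof (cases "mm L \<tau> x = mm L \<tau> y")
    case False
    then have "mm L \<tau> x + 1 \<le> mm L \<tau> y \<or> mm L \<tau> y + 1 \<le> mm L \<tau> x" by linarith
    then have "1 \<le> \<bar>D \<tau>\<bar>" unfolding D_def by linarith
    then have "1 * 1 \<le> \<bar>D \<tau>\<bar> * \<bar>D \<tau>\<bar>" by (intro mult_mono) auto
    then show ?thesis using False by (simp add: power2_eq_square)
  qed simp
  have sumD: "(\<Sum>\<tau>\<in>PS L. D \<tau>) = 0"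
    unfolding D_def using rot_sum[OF L xy(1,2)] by (simp add: sum_subtractf)
  have cnt: "(\<Sum>\<tau>\<in>PS L. (if mm L \<tau> x \<noteq> mm L \<tau> y then 1 else 0::real))
       = real (card {\<tau>\<in>PS L. mm L \<tau> x \<noteq> mm L \<tau> y})"
    using PS_fin by (simp add: sum.If_cases Int_def)
  have "(\<Sum>\<tau>\<in>PS L. phi L (dst L (fm L \<tau> x) (fm L \<tau> y)))
      = (\<Sum>\<tau>\<in>PS L. phi L d + D \<tau> * (real L - 2 * real d) - (D \<tau>)^2)"
    using eqn by (rule sum.cong[OF refl])
  also have "\<dots> \<le> (\<Sum>\<tau>\<in>PS L. phi L d + D \<tau> * (real L - 2 * real d) - (if mm L \<tau> x \<noteq> mm L \<tau> y then 1 else 0))"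
    using sq by (intro sum_mono) (simp add: algebra_simps)
  also have "\<dots> = c * phi L d + (\<Sum>\<tau>\<in>PS L. D \<tau>) * (real L - 2 * real d)
        - real (card {\<tau>\<in>PS L. mm L \<tau> x \<noteq> mm L \<tau> y})"
    unfolding c_def cnt[symmetric] by (simp add: sum.distrib sum_subtractf sum_distrib_right)
  also have "\<dots> \<le> c * phi L d - c / 4"
    using card_diff[OF L xy] sumD unfolding c_def by simp
  finally have S: "(\<Sum>\<tau>\<in>PS L. phi L (dst L (fm L \<tau> x) (fm L \<tau> y))) \<le> c * (phi L d - 1/4)"
    by (simp add: algebra_simps)
  have "measure_pmf.expectation (pf L) (\<lambda>f. phi L (dst L (f x) (f y)))
      = (\<Sum>\<tau>\<in>PS L. phi L (dst L (fm L \<tau> x) (fm L \<tau> y))) / c"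
    unfolding pf_def U_def c_def by (simp add: integral_pmf_of_set[OF PS_ne PS_fin])
  also have "\<dots> \<le> phi L d - 1/4" using S cpos by (simp add: divide_le_eq mult.commute)
  finally show ?thesis unfolding d_def .
qed



lemma exp_bind:
  fixes h :: "'b \<Rightarrow> real"
  assumes "finite (set_pmf p)" "\<And>x. x \<in> set_pmf p \<Longrightarrow> finite (set_pmf (f x))"
  shows "measure_pmf.expectation (bind_pmf p f) h
       = measure_pmf.expectation p (\<lambda>a. measure_pmf.expectation (f a) h)"
proof -
  have "measure_pmf.expectation (bind_pmf p f) h
      = (\<Sum>a\<in>set_pmf p. pmf p a *\<^sub>R measure_pmf.expectation (f a) h)"
    using assms by (intro pmf_expectation_bind) auto
  also have "\<dots> = measure_pmf.expectation p (\<lambda>a. measure_pmf.expectation (f a) h)"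
    using assms by (subst integral_measure_pmf[of "set_pmf p"]) auto
  finally show ?thesis .
qed

lemma exp_M_Suc:
  "measure_pmf.expectation (M L (Suc n)) (F :: _ \<Rightarrow> real)
   = measure_pmf.expectation (pf L) (\<lambda>f. measure_pmf.expectation (M L n) (\<lambda>g. F (g \<circ> f)))"
  by (simp add: exp_bind fin_pf M_fin)

lemma exp_M_add:
  "measure_pmf.expectation (M L (n + m)) (F :: _ \<Rightarrow> real)
   = measure_pmf.expectation (M L n) (\<lambda>g. measure_pmf.expectation (M L m) (\<lambda>h. F (h \<circ> g)))"
  unfolding M_add by (simp add: exp_bind M_fin)

lemma int_fin: "finite (set_pmf p) \<Longrightarrow> integrable (measure_pmf p) (f :: _ \<Rightarrow> real)"
  by (rule integrable_measure_pmf_finite)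

lemma exp_mono:
  assumes "finite (set_pmf p)" "\<And>x. x \<in> set_pmf p \<Longrightarrow> f x \<le> (g x :: real)"
  shows "measure_pmf.expectation p f \<le> measure_pmf.expectation p g"
  using assms by (intro integral_mono_AE int_fin AE_pmfI) auto

lemma exp_add_const:
  assumes "finite (set_pmf p)"
  shows "measure_pmf.expectation p (\<lambda>x. f x + (c::real)) = measure_pmf.expectation p f + c"
  using Bochner_Integration.integral_add[where M="measure_pmf p" and f=f and g="\<lambda>_. c"] int_fin[OF assms, of f] int_fin[OF assms, of "\<lambda>_. c"]
  by simp

definition Q :: "nat \<Rightarrow> nat \<Rightarrow> nat \<Rightarrow> nat \<Rightarrow> real" where
  "Q L n x y = measure_pmf.expectation (M L n) (\<lambda>g. if g x = g y then 0 else 1)"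

lemma phi_nonneg: "k \<le> L \<Longrightarrow> 0 \<le> phi L k" unfolding phi_def by simp

lemma dst_lt: "L \<ge> 1 \<Longrightarrow> dst L u v < L" unfolding dst_def by simp

lemma super:
  assumes L: "L \<ge> 2"
  shows "x < L \<Longrightarrow> y < L \<Longrightarrow> measure_pmf.expectation (M L n)
     (\<lambda>g. real n / 4 * (if g x = g y then 0 else 1) + phi L (dst L (g x) (g y))) \<le> phi L (dst L x y)"
proof (induction n arbitrary: x y)
  case 0 then show ?case by simp
next
  case (Suc n)
  show ?case
  proof (cases "x = y")
    case True
    have "dst L u u = 0" for u unfolding dst_def by simp
    then show ?thesis using True by (simp add: phi_def)
  next
    case False
    define G where "G = (\<lambda>g::nat\<Rightarrow>nat. real (Suc n) / 4 * (if g x = g y then 0 else 1) + phi L (dst L (g x) (g y)))"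
    have inner: "measure_pmf.expectation (M L n) (\<lambda>g. G (g \<circ> f)) \<le> phi L (dst L (f x) (f y)) + 1/4"
      if f: "f \<in> set_pmf (pf L)" for f
    proof -
      have fl: "f x < L" "f y < L" using f Suc.prems set_pf fm_lt L by auto
      have "measure_pmf.expectation (M L n) (\<lambda>g. G (g \<circ> f))
         \<le> measure_pmf.expectation (M L n)
           (\<lambda>g. (real n / 4 * (if g (f x) = g (f y) then 0 else 1) + phi L (dst L (g (f x)) (g (f y)))) + 1/4)"
        by (rule exp_mono[OF M_fin]) (simp add: G_def algebra_simps)
      also have "\<dots> = measure_pmf.expectation (M L n)
           (\<lambda>g. real n / 4 * (if g (f x) = g (f y) then 0 else 1) + phi L (dst L (g (f x)) (g (f y)))) + 1/4"
        by (rule exp_add_const[OF M_fin])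
      also have "\<dots> \<le> phi L (dst L (f x) (f y)) + 1/4" using Suc.IH[OF fl] by simp
      finally show ?thesis .
    qed
    have "measure_pmf.expectation (M L (Suc n)) G
        = measure_pmf.expectation (pf L) (\<lambda>f. measure_pmf.expectation (M L n) (\<lambda>g. G (g \<circ> f)))"
      by (rule exp_M_Suc)
    also have "\<dots> \<le> measure_pmf.expectation (pf L) (\<lambda>f. phi L (dst L (f x) (f y)) + 1/4)"
      by (rule exp_mono[OF fin_pf]) (rule inner)
    also have "\<dots> = measure_pmf.expectation (pf L) (\<lambda>f. phi L (dst L (f x) (f y))) + 1/4"
      by (rule exp_add_const[OF fin_pf])
    also have "\<dots> \<le> phi L (dst L x y)" using core[OF L Suc.prems False] by simp
    finally show ?thesis unfolding G_def .
  qed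
qed

lemma Q_nonneg: "0 \<le> Q L n x y"
  unfolding Q_def by (rule integral_nonneg_AE) auto

lemma Q_le1: "Q L n x y \<le> 1"
proof -
  have "Q L n x y \<le> measure_pmf.expectation (M L n) (\<lambda>_. 1::real)"
    unfolding Q_def by (rule exp_mono[OF M_fin]) auto
  then show ?thesis by simp
qed

lemma Q_same: "Q L n x x = 0" unfolding Q_def by simp

lemma Q_bound:
  assumes L: "L \<ge> 2" and xy: "x < L" "y < L"
  shows "Q L n x y * (real n / 4) \<le> real L ^ 2 / 4"
proof -
  have "Q L n x y * (real n / 4) = measure_pmf.expectation (M L n) (\<lambda>g. real n / 4 * (if g x = g y then 0 else 1))"
    unfolding Q_def by (simp add: mult.commute)
  also have "\<dots> \<le> measure_pmf.expectation (M L n)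
     (\<lambda>g. real n / 4 * (if g x = g y then 0 else 1) + phi L (dst L (g x) (g y)))"
  proof (rule exp_mono[OF M_fin])
    fix g :: "nat \<Rightarrow> nat"
    have "0 \<le> phi L (dst L (g x) (g y))" using L by (intro phi_nonneg less_imp_le dst_lt) auto
    then show "real n / 4 * (if g x = g y then 0 else 1)
        \<le> real n / 4 * (if g x = g y then 0 else 1) + phi L (dst L (g x) (g y))" by simp
  qed
  also have "\<dots> \<le> phi L (dst L x y)" by (rule super[OF L xy])
  also have "\<dots> \<le> real L ^ 2 / 4"
  proof -
    have "0 \<le> (real L - 2 * real (dst L x y))^2" by simp
    then show ?thesis unfolding phi_def by (simp add: power2_eq_square algebra_simps)
  qed
  finally show ?thesis .
qed

lemma Qcomp:
  assumes L: "L \<ge> 2" and xy: "x < L" "y < L" and c: "c \<ge> 0"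
    and H: "\<And>u v. u < L \<Longrightarrow> v < L \<Longrightarrow> u \<noteq> v \<Longrightarrow> Q L m u v \<le> c"
  shows "Q L (n + m) x y \<le> c * Q L n x y"
proof -
  have "Q L (n + m) x y = measure_pmf.expectation (M L n) (\<lambda>g. Q L m (g x) (g y))"
    unfolding Q_def by (simp add: exp_M_add)
  also have "\<dots> \<le> measure_pmf.expectation (M L n) (\<lambda>g. c * (if g x = g y then 0 else 1))"
  proof (rule exp_mono[OF M_fin])
    fix g assume g: "g \<in> set_pmf (M L n)"
    have "g x < L" "g y < L" using M_range[OF _ g] xy L by auto
    then show "Q L m (g x) (g y) \<le> c * (if g x = g y then 0 else 1)"
      using H by (auto simp: Q_same)
  qed
  also have "\<dots> = c * Q L n x y" unfolding Q_def by simp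
  finally show ?thesis .
qed

lemma Q_exp:
  assumes L: "L \<ge> 2"
  shows "\<forall>x y. x < L \<longrightarrow> y < L \<longrightarrow> x \<noteq> y \<longrightarrow> Q L (a * (4 * L^2 - 1)) x y \<le> (1/2) ^ a"
proof (induction a)
  case 0 then show ?case by (simp add: Q_def)
next
  case (Suc a)
  define K where "K = 4 * L^2 - 1"
  have QK: "Q L K x y \<le> 1/2" if "x < L" "y < L" for x y
  proof -
    have Kr: "real K = 4 * real L ^ 2 - 1" unfolding K_def using L
      by (simp add: of_nat_diff)
    have L4: "(2::real)^2 \<le> real L ^ 2" using L by (intro power_mono) auto
    have Kpos: "real K > 0" using Kr L4 by simp
    have "Q L K x y * (real K / 4) \<le> real L ^ 2 / 4" by (rule Q_bound[OF L that])
    then have "Q L K x y * real K \<le> real L ^ 2" by simp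
    also have "real L ^ 2 \<le> (1/2) * real K" using Kr L4 by simp
    finally show ?thesis using Kpos by (rule mult_right_le_imp_le)
  qed
  show ?case
  proof (intro allI impI)
    fix x y assume xy: "x < L" "y < L" "x \<noteq> y"
    have "Q L (K + a * K) x y \<le> (1/2)^a * Q L K x y"
      using Suc.IH unfolding K_def by (intro Qcomp[OF L xy(1,2)]) auto
    also have "\<dots> \<le> (1/2)^a * (1/2)" using QK[OF xy(1,2)] by (intro mult_left_mono) auto
    finally have fin: "Q L (K + a * K) x y \<le> (1/2)^a * (1/2)" .
    have e: "Suc a * (4 * L^2 - 1) = K + a * K" unfolding K_def by simp
    show "Q L (Suc a * (4 * L^2 - 1)) x y \<le> (1/2) ^ Suc a"
      unfolding e using fin by simp
  qed
qed



lemma traj_hd: "xs \<in> set_pmf (traj L n \<Gamma>) \<Longrightarrow> xs ! 0 = \<Gamma>"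
  by (cases n) auto

lemma chain_const:
  assumes H: "\<And>t. Suc t < L \<Longrightarrow> g t = g (Suc t)"
  shows "t < L \<Longrightarrow> g t = g 0"
proof (induction t)
  case 0 show ?case by (rule refl)
next
  case (Suc t)
  then have "t < L" by simp
  then have "g t = g 0" by (rule Suc.IH)
  moreover have "g t = g (Suc t)" using H Suc.prems by blast
  ultimately show ?case by simp
qed

lemma const_absorbed:
  assumes "\<And>t. t < L \<Longrightarrow> g t = g 0"
  shows "absorbed (app L g \<Gamma>)"
proof -
  have S: "\<forall>x\<in>set (app L g \<Gamma>). x = \<Gamma> ! g 0"
  proof
    fix x assume "x \<in> set (app L g \<Gamma>)"
    then obtain t where t: "t < L" "x = \<Gamma> ! g t" unfolding app_def by auto
    have "g t = g 0" using assms[OF t(1)] .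
    then show "x = \<Gamma> ! g 0" using t(2) by simp
  qed
  show ?thesis
  proof (cases "\<Gamma> ! g 0")
    case True then show ?thesis using S unfolding absorbed_def by blast
  next
    case False then show ?thesis using S unfolding absorbed_def by blast
  qed
qed

theorem claim5:
  fixes L a :: nat and \<Gamma>0 :: "bool list"
  assumes "L \<ge> 1" and "length \<Gamma>0 = L" and "a \<ge> 1"
  shows "measure_pmf.prob (traj L (4 * a * L ^ 2) \<Gamma>0)
           {xs. \<forall>i < 4 * a * L ^ 2. \<not> absorbed (xs ! i)}
         \<le> real L * (1 / 2) ^ a"
proof (cases "L = 1")
  case True
  then obtain c where c: "\<Gamma>0 = [c]" using assms(2) by (cases \<Gamma>0) auto
  have ab: "absorbed \<Gamma>0" unfolding c absorbed_def by (cases c) auto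
  have pos: "0 < 4 * a * L ^ 2" using assms by simp
  have "measure_pmf.prob (traj L (4 * a * L ^ 2) \<Gamma>0) {xs. \<forall>i < 4 * a * L ^ 2. \<not> absorbed (xs ! i)} = 0"
  proof -
    have "xs \<notin> {xs. \<forall>i < 4 * a * L ^ 2. \<not> absorbed (xs ! i)}" if "xs \<in> set_pmf (traj L (4 * a * L ^ 2) \<Gamma>0)" for xs
    proof
      assume "xs \<in> {xs. \<forall>i < 4 * a * L ^ 2. \<not> absorbed (xs ! i)}"
      then have "\<not> absorbed (xs ! 0)" using pos by blast
      then show False using traj_hd[OF that] ab by simp
    qed
    then show ?thesis unfolding measure_pmf_zero_iff by blast
  qed
  then show ?thesis by simp
next
  case False
  with assms have L: "L \<ge> 2" by simp
  define N where "N = 4 * a * L ^ 2"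
  define K where "K = 4 * L ^ 2 - 1"
  have "2 * 2 \<le> L * L" using L by (intro mult_mono) auto
  then have L4: "4 \<le> L ^ 2" by (simp add: power2_eq_square)
  have K1: "4 * L ^ 2 = K + 1" using L4 unfolding K_def by simp
  have "N = a * (4 * L ^ 2)" unfolding N_def by simp
  also have "\<dots> = a * (K + 1)" by (simp only: K1)
  also have "\<dots> = a * K + a" by simp
  finally have "N = a * K + a" .
  then have NK: "N - 1 = a * K + (a - 1)" using assms(3) by simp
  have "measure_pmf.prob (traj L N \<Gamma>0) {xs. \<forall>i < N. \<not> absorbed (xs ! i)}
      \<le> measure_pmf.prob (traj L N \<Gamma>0) {xs. \<not> absorbed (xs ! (N - 1))}"
  proof (rule measure_pmf.finite_measure_mono)
    have "N - 1 < N" unfolding N_def using assms by simp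
    then show "{xs. \<forall>i < N. \<not> absorbed (xs ! i)} \<subseteq> {xs. \<not> absorbed (xs ! (N - 1))}" by blast
  qed simp
  also have "\<dots> = measure_pmf.prob (map_pmf (\<lambda>xs. xs ! (N - 1)) (traj L N \<Gamma>0)) {G. \<not> absorbed G}"
    by (simp add: vimage_def)
  also have "\<dots> = measure_pmf.prob (M L (N - 1)) {g. \<not> absorbed (app L g \<Gamma>0)}"
    using traj_nth[OF L, of "N - 1" N \<Gamma>0] assms(2) by (simp add: vimage_def)
  also have "\<dots> = measure_pmf.expectation (M L (N - 1)) (indicator {g. \<not> absorbed (app L g \<Gamma>0)})"
    by (simp add: integral_indicator)
  also have "\<dots> \<le> measure_pmf.expectation (M L (N - 1))
       (\<lambda>g. \<Sum>t<L-1. (if g t = g (Suc t) then 0 else 1::real))"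
  proof (rule exp_mono[OF M_fin])
    fix g :: "nat \<Rightarrow> nat"
    show "indicator {g. \<not> absorbed (app L g \<Gamma>0)} g \<le> (\<Sum>t<L-1. (if g t = g (Suc t) then 0 else 1::real))"
    proof (cases "\<forall>t. Suc t < L \<longrightarrow> g t = g (Suc t)")
      case True
      then have "absorbed (app L g \<Gamma>0)" by (intro const_absorbed chain_const) auto
      then show ?thesis by (simp add: sum_nonneg)
    next
      case False
      then obtain t where t: "Suc t < L" "g t \<noteq> g (Suc t)" by blast
      have "(1::real) \<le> (\<Sum>t\<in>{t}. (if g t = g (Suc t) then 0 else 1::real))" using t by simp
      also have "\<dots> \<le> (\<Sum>t<L-1. (if g t = g (Suc t) then 0 else 1::real))"
        using t by (intro sum_mono2) auto
      finally show ?thesis by (simp add: indicator_def)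
    qed
  qed
  also have "\<dots> = (\<Sum>t<L-1. Q L (N - 1) t (Suc t))"
    unfolding Q_def by (rule Bochner_Integration.integral_sum) (rule int_fin[OF M_fin])
  also have "\<dots> \<le> (\<Sum>t<L-1. (1/2::real)^a)"
  proof (rule sum_mono)
    fix t assume "t \<in> {..<L-1}"
    then have t: "t < L" "Suc t < L" by auto
    have "Q L (a * K + (a - 1)) t (Suc t) \<le> 1 * Q L (a * K) t (Suc t)"
      using Q_le1 by (intro Qcomp[OF L t]) auto
    also have "\<dots> \<le> (1/2)^a" using Q_exp[OF L, of a] t unfolding K_def by simp
    finally show "Q L (N - 1) t (Suc t) \<le> (1/2)^a" unfolding NK .
  qed
  also have "\<dots> = real (L - 1) * (1/2)^a" by simp
  also have "\<dots> \<le> real L * (1/2)^a" by (intro mult_right_mono) auto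
  finally show ?thesis unfolding N_def .
qed


end
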